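(* Let $\mathcal{B}$ be a prime Banach algebra over $\mathbb{R}$ or $\mathbb{C}$ and let $D$ be a dense subset of $\mathcal{B}$. Suppose $\mathcal{B}$ admits a continuous automorphism $f$ and there exist fixed positive integers $p,q$ such that $$f(x^{p}\circ y^{q})+[x^{p},y^{q}]\in Z(\mathcal{B})\quad\text{for all } x,y\in D.$$ Then $\mathcal{B}$ is commutative.
   Context: $Z(\mathcal{B})$ denotes the center of $\mathcal{B}$. For $x,y\in\mathcal{B}$, $x\circ y=xy+yx$ and $[x,y]=xy-yx$. $\mathcal{B}$ is prime if $x\mathcal{B}y=\{0\}$ implies $x=0$ or $y=0$. An automorphism of $\mathcal{B}$ is a bijective map $f:\mathcal{B}\to\mathcal{B}$ with $f(x+y)=f(x)+f(y)$ and $f(xy)=f(x)f(y)$ for all $x,y$. *)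

theory Defs
  imports "HOL-Analysis.Analysis"
begin

definition center :: "'a::times set" where
  "center = {z. \<forall>x. z * x = x * z}"

definition jordan :: "'a::{times,plus} \<Rightarrow> 'a \<Rightarrow> 'a" where
  "jordan x y = x * y + y * x"

definition commutator :: "'a::{times,minus} \<Rightarrow> 'a \<Rightarrow> 'a" where
  "commutator x y = x * y - y * x"

text \<open>Positive powers in a possibly non-unital algebra: ppow x n = x^n for n \<ge> 1
  (the value for n = 0 is an irrelevant convention, here 0).\<close>
fun ppow :: "'a::{times,zero} \<Rightarrow> nat \<Rightarrow> 'a" where
  "ppow x 0 = 0"
| "ppow x (Suc 0) = x"
| "ppow x (Suc (Suc n)) = x * ppow x (Suc n)"

definition prime_ring :: "'a::{times,zero} itself \<Rightarrow> bool" where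
  "prime_ring _ \<longleftrightarrow> (\<forall>x y::'a. (\<forall>b. x * b * y = 0) \<longrightarrow> x = 0 \<or> y = 0)"

definition ring_automorphism :: "('a::{times,plus} \<Rightarrow> 'a) \<Rightarrow> bool" where
  "ring_automorphism f \<longleftrightarrow> bij f \<and> (\<forall>x y. f (x + y) = f x + f y) \<and> (\<forall>x y. f (x * y) = f x * f y)"

end

theory Submission imports Defs begin

lemma deriv_in_closed:
  fixes g :: "real \<Rightarrow> 'a::real_normed_vector"
  assumes S: "closed S" and gS: "\<forall>t. t \<noteq> 0 \<longrightarrow> (g t - g 0) /\<^sub>R t \<in> S"
    and d: "(g has_derivative (\<lambda>t. t *\<^sub>R L)) (at 0)"
  shows "L \<in> S"
proof -
  from d have lim: "((\<lambda>y. (1 / norm (y - 0)) *\<^sub>R (g y - (g 0 + (y - 0) *\<^sub>R L))) \<longlongrightarrow> 0) (at 0)"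
    unfolding has_derivative_at2 by blast
  have eq: "norm ((g t - g 0) /\<^sub>R t - L) = norm ((1 / norm (t - 0)) *\<^sub>R (g t - (g 0 + (t - 0) *\<^sub>R L)))"
    if "t \<noteq> 0" for t :: real
  proof -
    have "(g t - g 0) /\<^sub>R t - L = (1/t) *\<^sub>R (g t - (g 0 + t *\<^sub>R L))"
      using that by (simp add: algebra_simps divide_inverse)
    then show ?thesis using that by simp
  qed
  have "((\<lambda>t. norm ((g t - g 0) /\<^sub>R t - L)) \<longlongrightarrow> 0) (at 0)"
  proof -
    have "((\<lambda>t. norm ((1 / norm (t - 0)) *\<^sub>R (g t - (g 0 + (t - 0) *\<^sub>R L)))) \<longlongrightarrow> 0) (at (0::real))"
      using tendsto_norm_zero[OF lim] .
    then show ?thesis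
      by (rule Lim_transform_eventually) (auto simp: eventually_at_filter eq)
  qed
  then have "((\<lambda>t. (g t - g 0) /\<^sub>R t - L) \<longlongrightarrow> 0) (at 0)"
    by (rule tendsto_norm_zero_cancel)
  then have "((\<lambda>t. (g t - g 0) /\<^sub>R t) \<longlongrightarrow> L) (at 0)"
    using Lim_null by blast
  moreover have "eventually (\<lambda>t. (g t - g 0) /\<^sub>R t \<in> S) (at (0::real))"
    using gS by (auto simp: eventually_at_filter)
  ultimately show ?thesis
    using Lim_in_closed_set[OF S] by (metis trivial_limit_at)
qed

lemma ppow_add: "0 < m \<Longrightarrow> 0 < n \<Longrightarrow> ppow (x::'a::{semigroup_mult,zero}) m * ppow x n = ppow x (m + n)"
proof (induction m)
  case 0 then show ?case by simp
next
  case (Suc k)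
  show ?case
  proof (cases k)
    case 0 then show ?thesis using Suc.prems by (cases n) auto
  next
    case (Suc j)
    then have "ppow x (Suc k) * ppow x n = x * (ppow x k * ppow x n)" by (simp add: mult.assoc)
    also have "\<dots> = x * ppow x (k + n)" using Suc.IH Suc.prems Suc by simp
    also have "\<dots> = ppow x (Suc k + n)" using Suc Suc.prems by (cases n) auto
    finally show ?thesis .
  qed
qed

fun Lp :: "'a::{times,zero,plus} \<Rightarrow> 'a \<Rightarrow> nat \<Rightarrow> 'a" where
  "Lp x y 0 = 0"
| "Lp x y (Suc 0) = y"
| "Lp x y (Suc (Suc n)) = y * ppow x (Suc n) + x * Lp x y (Suc n)"

lemma deriv_ppow_Suc:
  fixes x y :: "'a::real_normed_algebra"
  shows "((\<lambda>t::real. ppow (x + t *\<^sub>R y) (Suc n)) has_derivative (\<lambda>t. t *\<^sub>R Lp x y (Suc n))) (at 0)"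
proof (induction n)
  case 0
  show ?case
    by (auto intro!: derivative_eq_intros)
next
  case (Suc n)
  have "((\<lambda>t::real. (x + t *\<^sub>R y) * ppow (x + t *\<^sub>R y) (Suc n)) has_derivative
      (\<lambda>t. (x + 0 *\<^sub>R y) * (t *\<^sub>R Lp x y (Suc n)) + (t *\<^sub>R y) * ppow (x + 0 *\<^sub>R y) (Suc n))) (at 0)"
    by (rule has_derivative_mult) (auto intro!: derivative_eq_intros Suc)
  moreover have "(\<lambda>t::real. ppow (x + t *\<^sub>R y) (Suc (Suc n))) = (\<lambda>t. (x + t *\<^sub>R y) * ppow (x + t *\<^sub>R y) (Suc n))"
    by simp
  ultimately show ?case
    by (auto simp: algebra_simps elim!: has_derivative_eq_rhs)
qed

lemma center_closed: "closed (center :: 'a::real_normed_algebra set)"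
proof -
  have "center = (\<Inter>x. {z::'a. z * x - x * z = 0})" by (auto simp: center_def)
  moreover have "closed {z::'a. z * x - x * z = 0}" for x
    by (intro closed_Collect_eq continuous_intros)
  ultimately show ?thesis by (metis (no_types, lifting) closed_INT)
qed

lemma center_quot: "a \<in> center \<Longrightarrow> b \<in> center \<Longrightarrow> (a - b) /\<^sub>R t \<in> (center :: 'a::real_normed_algebra set)"
proof -
  assume a: "a \<in> center" and b: "b \<in> center"
  have "(a - b) * x = x * (a - b)" for x
    using a b by (simp add: center_def left_diff_distrib right_diff_distrib)
  then show ?thesis by (simp add: center_def)
qed

lemma center_mult: "a \<in> center \<Longrightarrow> b \<in> center \<Longrightarrow> a * b \<in> (center :: 'a::real_normed_algebra set)"
proof -
  assume a: "a \<in> center" and b: "b \<in> center"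
  have "a * b * x = x * (a * b)" for x
  proof -
    have "a * b * x = a * (x * b)" using b by (simp add: center_def mult.assoc)
    also have "\<dots> = (a * x) * b" by (simp only: mult.assoc)
    also have "\<dots> = (x * a) * b" using a by (simp only: center_def mem_Collect_eq)
    also have "\<dots> = x * (a * b)" by (simp only: mult.assoc)
    finally show ?thesis .
  qed
  then show ?thesis by (simp add: center_def)
qed

lemma center_ppow: "c \<in> center \<Longrightarrow> ppow c n \<in> (center :: 'a::real_normed_algebra set)"
proof (induction c n rule: ppow.induct)
  case (1 x) then show ?case by (simp add: center_def)
next
  case (2 x) then show ?case by simp
next
  case (3 x n) then show ?case by (simp del: ppow.simps add: ppow.simps(3) center_mult)
qed

lemma Lp_central:
  fixes c y :: "'a::real_normed_algebra"
  assumes c: "c \<in> center"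
  shows "Lp c y (Suc (Suc n)) = real (Suc (Suc n)) *\<^sub>R (ppow c (Suc n) * y)"
proof (induction n)
  case 0
  have "y * c = c * y" using c by (simp add: center_def)
  then show ?case by (simp add: scaleR_2)
next
  case (Suc n)
  have yc: "y * ppow c (Suc (Suc n)) = ppow c (Suc (Suc n)) * y"
    using center_ppow[OF c, of "Suc (Suc n)"] by (simp add: center_def)
  have "Lp c y (Suc (Suc (Suc n))) = y * ppow c (Suc (Suc n)) + c * Lp c y (Suc (Suc n))"
    by simp
  also have "\<dots> = ppow c (Suc (Suc n)) * y + real (Suc (Suc n)) *\<^sub>R (c * (ppow c (Suc n) * y))"
    by (simp only: Suc.IH mult_scaleR_right yc)
  also have "c * (ppow c (Suc n) * y) = ppow c (Suc (Suc n)) * y"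
    by (simp add: mult.assoc)
  also have "ppow c (Suc (Suc n)) * y + real (Suc (Suc n)) *\<^sub>R (ppow c (Suc (Suc n)) * y)
     = (1 + real (Suc (Suc n))) *\<^sub>R (ppow c (Suc (Suc n)) * y)"
    by (simp only: scaleR_add_left scaleR_one)
  finally show ?case
    by simp
qed

lemma ppow_Suc_right: "ppow (x::'a::{semigroup_mult,zero}) (Suc n) * x = ppow x (Suc (Suc n))"
  using ppow_add[of "Suc n" 1 x] by simp

lemma central_nzd:
  fixes c a :: "'a::real_normed_algebra"
  assumes prime: "prime_ring TYPE('a)" and c: "c \<in> center" "c \<noteq> 0" and ca: "c * a = 0"
  shows "a = 0"
proof -
  have "c * b * a = 0" for b
  proof -
    have "c * b * a = b * c * a" using c by (simp add: center_def)
    also have "\<dots> = 0" using ca by (simp add: mult.assoc)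
    finally show ?thesis .
  qed
  then show ?thesis using prime c unfolding prime_ring_def by blast
qed

lemma ppow_nz:
  fixes c :: "'a::real_normed_algebra"
  assumes prime: "prime_ring TYPE('a)" and c: "c \<in> center" "c \<noteq> 0"
  shows "ppow c (Suc n) \<noteq> 0"
proof (induction n)
  case 0 then show ?case using c by simp
next
  case (Suc n)
  then show ?case using central_nzd[OF prime c, of "ppow c (Suc n)"] by auto
qed

lemma comm_from_central:
  fixes c y w :: "'a::real_normed_algebra"
  assumes prime: "prime_ring TYPE('a)" and c: "c \<in> center" "c \<noteq> 0"
    and pw: "\<forall>x::'a. ppow x (Suc (Suc m)) \<in> center"
  shows "y * w = w * y"
proof -
  let ?c = "ppow c (Suc m)"
  have cc: "?c \<in> center" by (rule center_ppow[OF c(1)])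
  have cnz: "?c \<noteq> 0" by (rule ppow_nz[OF prime c])
  have "Lp c y (Suc (Suc m)) \<in> center"
    by (rule deriv_in_closed[OF center_closed _ deriv_ppow_Suc]) (use pw in \<open>auto simp del: ppow.simps intro!: center_quot\<close>)
  then have "real (Suc (Suc m)) *\<^sub>R (?c * y) \<in> center" using Lp_central[OF c(1)] by simp
  then have "inverse (real (Suc (Suc m))) *\<^sub>R (real (Suc (Suc m)) *\<^sub>R (?c * y)) \<in> center"
    by (simp add: center_def)
  then have cy: "?c * y \<in> center" by simp
  have "?c * (y * w) = (?c * y) * w" by (simp add: mult.assoc)
  also have "\<dots> = w * (?c * y)" using cy by (simp add: center_def)
  also have "\<dots> = (w * ?c) * y" by (simp add: mult.assoc)
  also have "\<dots> = ?c * (w * y)" using cc by (simp add: center_def mult.assoc)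
  finally have "?c * (y * w - w * y) = 0" by (simp add: algebra_simps)
  then have "y * w - w * y = 0" by (rule central_nzd[OF prime cc cnz])
  then show ?thesis by simp
qed

lemma nil_step:
  fixes x :: "'a::real_normed_algebra"
  assumes prime: "prime_ring TYPE('a)" and z: "\<forall>x::'a. ppow x (Suc (Suc m)) = 0"
  shows "ppow x (Suc m) = 0"
proof -
  have "ppow x (Suc m) * y * ppow x (Suc m) = 0" for y
  proof -
    have "Lp x y (Suc (Suc m)) \<in> {0}"
      by (rule deriv_in_closed[OF closed_singleton _ deriv_ppow_Suc]) (auto simp del: ppow.simps simp add: z)
    then have "0 = ppow x (Suc m) * Lp x y (Suc (Suc m))" by simp
    also have "\<dots> = ppow x (Suc m) * y * ppow x (Suc m) + (ppow x (Suc m) * x) * Lp x y (Suc m)"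
      by (simp add: algebra_simps mult.assoc del: ppow.simps)
    also have "ppow x (Suc m) * x = 0" using z ppow_Suc_right by metis
    finally show ?thesis by simp
  qed
  then show ?thesis using prime unfolding prime_ring_def by blast
qed

lemma nil_trivial:
  fixes x :: "'a::real_normed_algebra"
  assumes prime: "prime_ring TYPE('a)" and z: "\<forall>x::'a. ppow x (Suc n) = 0"
  shows "x = 0"
  using z
proof (induction n)
  case 0 then show ?case by simp
next
  case (Suc n)
  then show ?case using nil_step[OF prime] by blast
qed

lemma cont_ppow: "continuous_on UNIV (\<lambda>x::'a::real_normed_algebra. ppow x n)"
proof (cases n)
  case 0 then show ?thesis by simp
next
  case (Suc k)
  have "continuous_on UNIV (\<lambda>x::'a. ppow x (Suc k))"
  proof (induction k)
    case 0 then show ?case by (simp add: continuous_on_id)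
  next
    case (Suc k)
    then show ?case by (simp del: ppow.simps add: ppow.simps(3)) (intro continuous_intros)
  qed
  then show ?thesis using Suc by simp
qed

theorem mainTheorem5:
  fixes D :: "'a::{real_normed_algebra, banach} set"
    and f :: "'a \<Rightarrow> 'a"
    and p q :: nat
  assumes prime: "prime_ring TYPE('a)"
    and dense: "closure D = UNIV"
    and aut: "ring_automorphism f"
    and cont: "continuous_on UNIV f"
    and pq: "p > 0" "q > 0"
    and cond: "\<forall>x\<in>D. \<forall>y\<in>D. f (jordan (ppow x p) (ppow y q)) + commutator (ppow x p) (ppow y q) \<in> center"
  shows "\<forall>x y::'a. x * y = y * x"
proof -
  obtain m where N: "p + q = Suc (Suc m)" using pq by (cases p; cases q) auto
  have bij: "bij f" and add: "\<And>x y. f (x + y) = f x + f y" and mul: "\<And>x y. f (x * y) = f x * f y"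
    using aut unfolding ring_automorphism_def by auto
  have Dc: "ppow x (p + q) \<in> center" if x: "x \<in> D" for x
  proof -
    let ?a = "ppow x (p + q)"
    have j: "jordan (ppow x p) (ppow x q) = ?a + ?a"
      unfolding jordan_def using ppow_add[OF pq, of x] ppow_add[OF pq(2) pq(1), of x] by (simp add: add.commute)
    have k: "commutator (ppow x p) (ppow x q) = 0"
      unfolding commutator_def using ppow_add[OF pq, of x] ppow_add[OF pq(2) pq(1), of x] by (simp add: add.commute)
    have "f (jordan (ppow x p) (ppow x q)) + commutator (ppow x p) (ppow x q) \<in> center"
      using cond x by blast
    then have "f ?a + f ?a \<in> center" by (simp only: j k add add_0_right)
    then have fa: "f ?a \<in> center"
    proof -
      assume h: "f ?a + f ?a \<in> center"
      have "f ?a * w = w * f ?a" for w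
      proof -
        have "2 *\<^sub>R (f ?a * w) = 2 *\<^sub>R (w * f ?a)"
          using h by (simp add: center_def scaleR_2 algebra_simps)
        then show ?thesis by simp
      qed
      then show ?thesis by (simp add: center_def)
    qed
    have "?a * w = w * ?a" for w
    proof -
      have "f (?a * w) = f (w * ?a)" using fa mul by (simp add: center_def)
      then show ?thesis using bij by (auto simp: bij_def inj_def)
    qed
    then show ?thesis by (simp add: center_def)
  qed
  have cl: "closed {x::'a. ppow x (p + q) \<in> center}"
    using continuous_closed_preimage[OF cont_ppow closed_UNIV center_closed] by (simp add: vimage_def)
  have allc: "\<forall>x::'a. ppow x (Suc (Suc m)) \<in> center"
  proof -
    have "D \<subseteq> {x::'a. ppow x (p + q) \<in> center}" using Dc by auto
    then have "closure D \<subseteq> {x::'a. ppow x (p + q) \<in> center}" using cl by (rule closure_minimal)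
    then show ?thesis using dense N by auto
  qed
  show ?thesis
  proof (cases "\<exists>x::'a. ppow x (Suc (Suc m)) \<noteq> 0")
    case True
    then obtain x :: 'a where "ppow x (Suc (Suc m)) \<noteq> 0" by blast
    then show ?thesis using comm_from_central[OF prime _ _ allc] allc by blast
  next
    case False
    then have "\<forall>x::'a. x = 0" using nil_trivial[OF prime, of "Suc m"] by blast
    then show ?thesis by metis
  qed
qed

end
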